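(* Let $d\ge1$, let $|\cdot|$ be any norm on $\mathbb{R}^d$, let $0<p<q<+\infty$ and let $X$ be an $\mathbb{R}^d$-valued random vector with $\mathbb{E}|X|^p<+\infty$ and distribution $\mu$. Let $(a_N)_{N\ge1}$ be an $L^p$-optimal greedy quantization sequence for $X$, and assume that for some $b\in(0,\frac12)$ the $b$-maximal function $\Psi_b$ associated with $(a_N)_{N\ge1}$ satisfies $\int_{\mathbb{R}^d}\Psi_b^{\frac{q}{p+d}}d\mu<+\infty$. Then $\mathbb{E}|X|^q<+\infty$ and $$\limsup_{N\to+\infty}N^{\frac1d}\,e_q(a^{(N)},X)<+\infty.$$
   Context: For $\Gamma\subset\mathbb{R}^d$ and $r>0$ put $e_r(\Gamma,X)=\big(\mathbb{E}\,d(X,\Gamma)^r\big)^{1/r}$ with $d(\xi,\Gamma)=\inf_{a\in\Gamma}|\xi-a|$ ($d(\xi,\emptyset)=+\infty$). A sequence $(a_N)_{N\ge1}$ in $\mathbb{R}^d$ is an $L^p$-optimal greedy quantization sequence if, writing $a^{(N)}=\{a_1,\dots,a_N\}$ and $a^{(0)}=\emptyset$, one has $a_{N+1}\in\operatorname{argmin}_{\xi\in\mathbb{R}^d}e_p(a^{(N)}\cup\{\xi\},X)$ for every $N\ge0$. For $b\in(0,\frac12)$, the $b$-maximal function associated with $(a_N)$ is $$\Psi_b(\xi)=\sup_{N\ge1}\frac{\lambda_d\big(B(\xi,b\,d(\xi,a^{(N)}))\big)}{\mu\big(B(\xi,b\,d(\xi,a^{(N)}))\big)}\in[0,+\infty],\quad\xi\in\mathbb{R}^d,$$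 where $\lambda_d$ is Lebesgue measure, $B(x,\rho)$ is the closed ball for $|\cdot|$, with the convention $\frac10=+\infty$. *)

theory Defs
  imports "HOL-Analysis.Analysis" "HOL-Probability.Probability"
begin

text \<open>A norm on a real vector space (the norm in the paper is arbitrary, not
  necessarily the Euclidean one).\<close>
definition is_norm :: "('a::real_vector \<Rightarrow> real) \<Rightarrow> bool" where
  "is_norm nrm \<longleftrightarrow> (\<forall>x. 0 \<le> nrm x) \<and> (\<forall>x. nrm x = 0 \<longleftrightarrow> x = 0)
     \<and> (\<forall>c x. nrm (c *\<^sub>R x) = \<bar>c\<bar> * nrm x) \<and> (\<forall>x y. nrm (x + y) \<le> nrm x + nrm y)"

definition nball :: "('a::real_vector \<Rightarrow> real) \<Rightarrow> 'a \<Rightarrow> real \<Rightarrow> 'a set" where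
  "nball nrm x \<rho> = {y. nrm (y - x) \<le> \<rho>}"

definition dist_set :: "('a::real_vector \<Rightarrow> real) \<Rightarrow> 'a \<Rightarrow> 'a set \<Rightarrow> ennreal" where
  "dist_set nrm \<xi> \<Gamma> = (if \<Gamma> = {} then \<infinity> else ennreal (Inf ((\<lambda>a. nrm (\<xi> - a)) ` \<Gamma>)))"

definition enn_powr :: "ennreal \<Rightarrow> real \<Rightarrow> ennreal" where
  "enn_powr x r = (if x = \<infinity> then \<infinity> else ennreal (enn2real x powr r))"

definition quant_err ::
  "('a::real_vector \<Rightarrow> real) \<Rightarrow> 'b measure \<Rightarrow> ('b \<Rightarrow> 'a) \<Rightarrow> real \<Rightarrow> 'a set \<Rightarrow> ennreal" where
  "quant_err nrm M X r \<Gamma> = enn_powr (\<integral>\<^sup>+ \<omega>. enn_powr (dist_set nrm (X \<omega>) \<Gamma>) r \<partial>M) (1 / r)"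

definition first_pts :: "(nat \<Rightarrow> 'a) \<Rightarrow> nat \<Rightarrow> 'a set" where
  "first_pts a n = a ` {1..n}"

definition greedy_seq ::
  "('a::real_vector \<Rightarrow> real) \<Rightarrow> 'b measure \<Rightarrow> ('b \<Rightarrow> 'a) \<Rightarrow> real \<Rightarrow> (nat \<Rightarrow> 'a) \<Rightarrow> bool" where
  "greedy_seq nrm M X p a \<longleftrightarrow>
     (\<forall>n. \<forall>\<xi>. quant_err nrm M X p (first_pts a n \<union> {a (Suc n)})
              \<le> quant_err nrm M X p (first_pts a n \<union> {\<xi>}))"

text \<open>The b-maximal function Psi_b associated with (a_N) (mu the distribution of X,
  lborel the Lebesgue measure). Division in ennreal gives c/0 = infinity for c > 0.\<close>
definition max_fun ::
  "('a::euclidean_space \<Rightarrow> real) \<Rightarrow> 'a measure \<Rightarrow> (nat \<Rightarrow> 'a) \<Rightarrow> real \<Rightarrow> 'a \<Rightarrow> ennreal" where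
  "max_fun nrm \<mu> a b \<xi> =
     (SUP n\<in>{1..}. emeasure lborel (nball nrm \<xi> (b * enn2real (dist_set nrm \<xi> (first_pts a n))))
                  / emeasure \<mu> (nball nrm \<xi> (b * enn2real (dist_set nrm \<xi> (first_pts a n)))))"

end

theory Submission
  imports Defs "HOL-Analysis.Analysis" "HOL-Probability.Probability"
begin


lemma nrm_basic:
  assumes "is_norm nrm"
  shows "nrm 0 = 0" "\<And>x. nrm (- x) = nrm x" "\<And>x y. nrm (x - y) = nrm (y - x)"
    "\<And>x. 0 \<le> nrm x" "\<And>x y. nrm (x + y) \<le> nrm x + nrm y"
    "\<And>x y z. nrm (x - z) \<le> nrm (x - y) + nrm (y - z)"
    "\<And>x y. nrm x \<le> nrm (x - y) + nrm y"
proof -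
  have s: "\<And>c x. nrm (c *\<^sub>R x) = \<bar>c\<bar> * nrm x" and t: "\<And>x y. nrm (x + y) \<le> nrm x + nrm y"
    and n: "\<And>x. 0 \<le> nrm x"
    using assms unfolding is_norm_def by auto
  show "nrm 0 = 0" using s[of 0 0] by simp
  show m: "\<And>x. nrm (- x) = nrm x" using s[of "-1"] by simp
  show "\<And>x y. nrm (x - y) = nrm (y - x)" by (metis m minus_diff_eq)
  show "\<And>x. 0 \<le> nrm x" by (rule n)
  show "\<And>x y. nrm (x + y) \<le> nrm x + nrm y" by (rule t)
  show "\<And>x y z. nrm (x - z) \<le> nrm (x - y) + nrm (y - z)" using t by (metis diff_add_cancel add_diff_eq)
  show "\<And>x y. nrm x \<le> nrm (x - y) + nrm y" using t by (metis diff_add_cancel)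
qed

lemma nrm_sum:
  assumes "is_norm nrm"
  shows "nrm (sum f S) \<le> (\<Sum>i\<in>S. nrm (f i))"
proof (induction S rule: infinite_finite_induct)
  case (infinite A) then show ?case using nrm_basic[OF assms] by simp
next
  case empty then show ?case using nrm_basic[OF assms] by simp
next
  case (insert x F)
  then show ?case using nrm_basic(5)[OF assms, of "f x" "sum f F"] by simp
qed

lemma nrm_bound:
  fixes nrm :: "'a::euclidean_space \<Rightarrow> real"
  assumes "is_norm nrm"
  obtains C where "C > 0" "\<And>x. nrm x \<le> C * norm x"
proof -
  have s: "\<And>c x. nrm (c *\<^sub>R x) = \<bar>c\<bar> * nrm x" using assms unfolding is_norm_def by auto
  define C where "C = 1 + (\<Sum>i\<in>Basis. nrm i)"
  have C0: "(\<Sum>i\<in>Basis. nrm i) \<ge> 0" by (rule sum_nonneg) (use nrm_basic[OF assms] in auto)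
  have "nrm x \<le> C * norm x" for x
  proof -
    have "nrm x = nrm (\<Sum>i\<in>Basis. (x \<bullet> i) *\<^sub>R i)" by (simp add: euclidean_representation)
    also have "\<dots> \<le> (\<Sum>i\<in>Basis. nrm ((x \<bullet> i) *\<^sub>R i))" by (rule nrm_sum[OF assms])
    also have "\<dots> = (\<Sum>i\<in>Basis. \<bar>x \<bullet> i\<bar> * nrm i)" by (simp add: s)
    also have "\<dots> \<le> (\<Sum>i\<in>Basis. norm x * nrm i)"
      by (rule sum_mono, rule mult_right_mono) (auto simp: Basis_le_norm nrm_basic[OF assms])
    also have "\<dots> \<le> C * norm x" using C0 by (simp add: C_def sum_distrib_left[symmetric] algebra_simps)
    finally show ?thesis .
  qed
  moreover have "C > 0" using C0 by (simp add: C_def)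
  ultimately show ?thesis using that by blast
qed

lemma nrm_continuous:
  fixes nrm :: "'a::euclidean_space \<Rightarrow> real"
  assumes "is_norm nrm"
  shows "continuous_on UNIV nrm"
proof -
  obtain C where C: "C > 0" "\<And>x. nrm x \<le> C * norm x" using nrm_bound[OF assms] by blast
  have "\<bar>nrm x - nrm y\<bar> \<le> C * dist x y" for x y
  proof -
    have "nrm x \<le> nrm (x - y) + nrm y" "nrm y \<le> nrm (y - x) + nrm x" using nrm_basic(7)[OF assms] by auto
    moreover have "nrm (x - y) \<le> C * dist x y" "nrm (y - x) \<le> C * dist x y"
      using C(2)[of "x-y"] C(2)[of "y-x"] by (simp_all add: dist_norm norm_minus_commute)
    ultimately show ?thesis by linarith
  qed
  then have "C-lipschitz_on UNIV nrm" using C(1) by (intro lipschitz_onI) (auto simp: dist_real_def)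
  then show ?thesis by (rule lipschitz_on_continuous_on)
qed

lemma nrm_measurable:
  fixes nrm :: "'a::euclidean_space \<Rightarrow> real"
  assumes "is_norm nrm"
  shows "nrm \<in> borel_measurable borel"
  using nrm_continuous[OF assms] by (rule borel_measurable_continuous_onI)

definition Dn :: "('a::real_vector \<Rightarrow> real) \<Rightarrow> (nat \<Rightarrow> 'a) \<Rightarrow> nat \<Rightarrow> 'a \<Rightarrow> real" where
  "Dn nrm a n x = Min ((\<lambda>i. nrm (x - a i)) ` {1..n})"

lemma Dn_le: "i \<in> {1..n} \<Longrightarrow> Dn nrm a n x \<le> nrm (x - a i)"
  unfolding Dn_def by (rule Min_le) auto

lemma Dn_attained: "n \<ge> 1 \<Longrightarrow> \<exists>i\<in>{1..n}. Dn nrm a n x = nrm (x - a i)"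
proof -
  assume "n \<ge> 1"
  then have "Dn nrm a n x \<in> (\<lambda>i. nrm (x - a i)) ` {1..n}" unfolding Dn_def by (intro Min_in) auto
  then show ?thesis by blast
qed

lemma Dn_nonneg: "is_norm nrm \<Longrightarrow> n \<ge> 1 \<Longrightarrow> 0 \<le> Dn nrm a n x"
  using Dn_attained[of n nrm a x] nrm_basic(4)[of nrm] by metis

lemma Dn_mono: "1 \<le> n \<Longrightarrow> n \<le> m \<Longrightarrow> Dn nrm a m x \<le> Dn nrm a n x"
  using Dn_attained[of n nrm a x] Dn_le[of _ m nrm a x] by force

lemma Dn_lip: assumes "is_norm nrm" "n \<ge> 1"
  shows "Dn nrm a n x \<le> Dn nrm a n y + nrm (x - y)"
proof -
  obtain i where i: "i \<in> {1..n}" "Dn nrm a n y = nrm (y - a i)" using Dn_attained[OF assms(2)] by blast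
  have "Dn nrm a n x \<le> nrm (x - a i)" by (rule Dn_le[OF i(1)])
  also have "\<dots> \<le> nrm (x - y) + nrm (y - a i)" by (rule nrm_basic(6)[OF assms(1)])
  finally show ?thesis using i by simp
qed

lemma Dn_continuous:
  fixes nrm :: "'a::euclidean_space \<Rightarrow> real"
  assumes "is_norm nrm"
  shows "continuous_on UNIV (Dn nrm a n)"
proof (cases "n \<ge> 1")
  case False
  then have "Dn nrm a n = (\<lambda>x. Min {})" unfolding Dn_def by (auto simp: fun_eq_iff)
  then show ?thesis by simp
next
  case True
  obtain C where C: "C > 0" "\<And>x. nrm x \<le> C * norm x" using nrm_bound[OF assms] by blast
  have "\<bar>Dn nrm a n x - Dn nrm a n y\<bar> \<le> C * dist x y" for x y
  proof -
    have "Dn nrm a n x \<le> Dn nrm a n y + nrm (x - y)" "Dn nrm a n y \<le> Dn nrm a n x + nrm (y - x)"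
      using Dn_lip[OF assms True] by auto
    moreover have "nrm (x - y) \<le> C * dist x y" "nrm (y - x) \<le> C * dist x y"
      using C(2)[of "x-y"] C(2)[of "y-x"] by (simp_all add: dist_norm norm_minus_commute)
    ultimately show ?thesis by linarith
  qed
  then have "C-lipschitz_on UNIV (Dn nrm a n)" using C(1) by (intro lipschitz_onI) (auto simp: dist_real_def)
  then show ?thesis by (rule lipschitz_on_continuous_on)
qed

lemma Dn_measurable:
  fixes nrm :: "'a::euclidean_space \<Rightarrow> real"
  assumes "is_norm nrm"
  shows "Dn nrm a n \<in> borel_measurable borel"
  using Dn_continuous[OF assms] by (rule borel_measurable_continuous_onI)

lemma first_pts_Suc: "first_pts a n \<union> {a (Suc n)} = first_pts a (Suc n)"
proof -
  have "a ` {1..Suc n} = insert (a (Suc n)) (a ` {1..n})" by (simp add: atLeastAtMostSuc_conv)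
  then show ?thesis unfolding first_pts_def by auto
qed

lemma dist_set_Dn: "n \<ge> 1 \<Longrightarrow> dist_set nrm x (first_pts a n) = ennreal (Dn nrm a n x)"
  unfolding dist_set_def first_pts_def Dn_def
  by (auto simp: image_image cInf_eq_Min)

lemma dist_set_Dn_ins: "n \<ge> 1 \<Longrightarrow>
   dist_set nrm x (first_pts a n \<union> {\<xi>}) = ennreal (min (Dn nrm a n x) (nrm (x - \<xi>)))"
proof -
  assume n: "n \<ge> 1"
  have e: "(\<lambda>y. nrm (x - y)) ` (first_pts a n \<union> {\<xi>}) = insert (nrm (x - \<xi>)) ((\<lambda>i. nrm (x - a i)) ` {1..n})"
    unfolding first_pts_def by auto
  have "Inf (insert (nrm (x - \<xi>)) ((\<lambda>i. nrm (x - a i)) ` {1..n})) = min (nrm (x - \<xi>)) (Dn nrm a n x)"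
    using n unfolding Dn_def by (subst cInf_eq_Min) (auto simp: Min_insert)
  then show ?thesis unfolding dist_set_def e by (auto simp: min.commute)
qed



lemma ball_meas_measurable:
  fixes nrm :: "'a::euclidean_space \<Rightarrow> real" and \<nu> :: "'a measure"
  assumes "sigma_finite_measure \<nu>" "sets \<nu> = sets borel" "is_norm nrm" "continuous_on UNIV r"
  shows "(\<lambda>\<xi>. emeasure \<nu> (nball nrm \<xi> (r \<xi>))) \<in> borel_measurable borel"
proof -
  define Q where "Q = {z :: 'a \<times> 'a. nrm (snd z - fst z) \<le> r (fst z)}"
  have c1: "continuous_on UNIV (\<lambda>z :: 'a \<times> 'a. nrm (snd z - fst z))"
    by (rule continuous_on_compose2[OF nrm_continuous[OF assms(3)]]) (auto intro!: continuous_intros)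
  have c2: "continuous_on UNIV (\<lambda>z :: 'a \<times> 'a. r (fst z))"
    by (rule continuous_on_compose2[OF assms(4)]) (auto intro!: continuous_intros)
  have "closed Q" unfolding Q_def by (rule closed_Collect_le[OF c1 c2])
  then have "Q \<in> sets borel" by (rule borel_closed)
  moreover have "sets (borel \<Otimes>\<^sub>M \<nu>) = sets (borel :: ('a \<times> 'a) measure)"
    using sets_pair_measure_cong[OF refl assms(2)] borel_prod by metis
  ultimately have Q: "Q \<in> sets (borel \<Otimes>\<^sub>M \<nu>)" by simp
  have "(\<lambda>\<xi>. emeasure \<nu> (Pair \<xi> -` Q)) \<in> borel_measurable borel"
    by (rule sigma_finite_measure.measurable_emeasure_Pair[OF assms(1) Q])
  moreover have "Pair \<xi> -` Q = nball nrm \<xi> (r \<xi>)" for \<xi>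
    unfolding Q_def nball_def by auto
  ultimately show ?thesis by simp
qed

lemma nball_sets: "is_norm nrm \<Longrightarrow> nball nrm \<xi> \<rho> \<in> sets (borel :: ('a::euclidean_space) measure)"
proof -
  assume n: "is_norm nrm"
  have "(\<lambda>y. nrm (y - \<xi>)) \<in> borel_measurable borel"
    using nrm_measurable[OF n] by measurable
  then show ?thesis unfolding nball_def by measurable
qed

lemma lborel_nball_lower:
  fixes nrm :: "'a::euclidean_space \<Rightarrow> real"
  assumes "is_norm nrm"
  obtains L where "L > 0" "\<And>\<xi> \<rho>. \<rho> \<ge> 0 \<Longrightarrow> ennreal (L * \<rho> ^ DIM('a)) \<le> emeasure lborel (nball nrm \<xi> \<rho>)"
proof -
  obtain C where C: "C > 0" "\<And>x. nrm x \<le> C * norm x" using nrm_bound[OF assms] by blast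
  define L where "L = unit_ball_vol (real DIM('a)) * (1 / C) ^ DIM('a)"
  have L: "L > 0" unfolding L_def using C(1) by simp
  have "ennreal (L * \<rho> ^ DIM('a)) \<le> emeasure lborel (nball nrm \<xi> \<rho>)" if r: "\<rho> \<ge> 0" for \<xi> \<rho>
  proof -
    have "cball \<xi> (\<rho> / C) \<subseteq> nball nrm \<xi> \<rho>"
    proof
      fix y assume "y \<in> cball \<xi> (\<rho> / C)"
      then have "norm (y - \<xi>) \<le> \<rho> / C" by (simp add: dist_norm norm_minus_commute)
      then have "C * norm (y - \<xi>) \<le> \<rho>" using C(1) by (simp add: field_simps)
      then show "y \<in> nball nrm \<xi> \<rho>" using C(2)[of "y - \<xi>"] unfolding nball_def by simp
    qed
    then have "emeasure lborel (cball \<xi> (\<rho> / C)) \<le> emeasure lborel (nball nrm \<xi> \<rho>)"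
      using nball_sets[OF assms, of \<xi> \<rho>] by (intro emeasure_mono) (simp_all add: sets_lborel)
    moreover have "emeasure lborel (cball \<xi> (\<rho> / C)) = ennreal (L * \<rho> ^ DIM('a))"
      using r C(1) by (subst emeasure_cball) (auto simp: L_def power_divide field_simps)
    ultimately show ?thesis by simp
  qed
  then show ?thesis using that L by blast
qed

lemma max_fun_alt:
  assumes "is_norm nrm"
  shows "max_fun nrm \<mu> a b \<xi> =
    (SUP n\<in>{1..}. emeasure lborel (nball nrm \<xi> (b * Dn nrm a n \<xi>)) / emeasure \<mu> (nball nrm \<xi> (b * Dn nrm a n \<xi>)))"
  unfolding max_fun_def
  by (intro SUP_cong refl) (simp add: dist_set_Dn Dn_nonneg[OF assms])

lemma max_fun_measurable:
  fixes nrm :: "'a::euclidean_space \<Rightarrow> real" and \<mu> :: "'a measure"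
  assumes "is_norm nrm" "finite_measure \<mu>" "sets \<mu> = sets borel"
  shows "max_fun nrm \<mu> a b \<in> borel_measurable borel"
proof -
  have c: "continuous_on UNIV (\<lambda>\<xi>. b * Dn nrm a n \<xi>)" for n
    using Dn_continuous[OF assms(1)] by (auto intro!: continuous_intros)
  have sf: "sigma_finite_measure \<mu>" using assms(2) by (simp add: finite_measure.axioms(1))
  have sl: "sigma_finite_measure (lborel :: 'a measure)" by (rule lborel.sigma_finite_measure_axioms)
  have m1: "(\<lambda>\<xi>. emeasure lborel (nball nrm \<xi> (b * Dn nrm a n \<xi>))) \<in> borel_measurable borel" for n
    by (rule ball_meas_measurable[OF sl _ assms(1) c]) simp
  have m2: "(\<lambda>\<xi>. emeasure \<mu> (nball nrm \<xi> (b * Dn nrm a n \<xi>))) \<in> borel_measurable borel" for n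
    by (rule ball_meas_measurable[OF sf assms(3) assms(1) c])
  show ?thesis
    unfolding max_fun_alt[OF assms(1), abs_def]
    by (intro borel_measurable_SUP borel_measurable_divide_ennreal m1 m2) auto
qed



lemma powr_sum_le:
  fixes s t r :: real
  assumes "0 \<le> s" "0 \<le> t" "0 < r"
  shows "(s + t) powr r \<le> 2 powr r * (s powr r + t powr r)"
proof -
  have "(s + t) powr r \<le> (2 * max s t) powr r" using assms by (intro powr_mono2) auto
  also have "\<dots> = 2 powr r * max s t powr r" by (simp add: powr_mult)
  also have "max s t powr r \<le> s powr r + t powr r" by (simp add: max_def)
  then have "2 powr r * max s t powr r \<le> 2 powr r * (s powr r + t powr r)" by simp
  finally show ?thesis .
qed

lemma enn_powr_ennreal: "0 \<le> t \<Longrightarrow> enn_powr (ennreal t) r = ennreal (t powr r)"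
  unfolding enn_powr_def by simp

lemma enn_powr_cancel:
  assumes "enn_powr x r \<le> enn_powr y r" "0 < r"
  shows "x \<le> y"
proof (cases "y = \<infinity>")
  case True then show ?thesis by simp
next
  case False
  then have "enn_powr y r \<noteq> \<infinity>" unfolding enn_powr_def by simp
  then have xf: "x \<noteq> \<infinity>" using assms(1) unfolding enn_powr_def by (auto split: if_splits simp: top_unique)
  obtain x' y' where xy: "x = ennreal x'" "y = ennreal y'" "0 \<le> x'" "0 \<le> y'"
    using xf False by (metis ennreal_cases infinity_ennreal_def)
  then have "x' powr r \<le> y' powr r" using assms(1) by (simp add: enn_powr_ennreal)
  then have "x' \<le> y'"
    using xy(3,4) assms(2) by (metis not_le powr_less_mono2)
  then show ?thesis using xy by simp
qed

locale gsetting =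
  fixes nrm :: "'a::euclidean_space \<Rightarrow> real" and M :: "'b measure" and X :: "'b \<Rightarrow> 'a"
    and p b :: real and a :: "nat \<Rightarrow> 'a"
  assumes nrm: "is_norm nrm" and prob: "prob_space M" and Xm: "X \<in> borel_measurable M"
    and p: "0 < p" and intp: "(\<integral>\<^sup>+ \<omega>. ennreal (nrm (X \<omega>) powr p) \<partial>M) < \<infinity>"
    and greedy: "greedy_seq nrm M X p a" and b0: "0 < b" and b1: "b < 1/2"
begin

definition "mu = distr M borel X"
definition "u n = (\<integral>\<^sup>+ \<omega>. ennreal (Dn nrm a n (X \<omega>) powr p) \<partial>M)"
definition "U n = enn2real (u n)"

lemma mu_prob: "prob_space mu"
  unfolding mu_def by (rule prob_space.prob_space_distr[OF prob Xm])

lemma sets_mu[simp]: "sets mu = sets borel"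
  unfolding mu_def by simp

lemma DXm: "(\<lambda>\<omega>. Dn nrm a n (X \<omega>)) \<in> borel_measurable M"
  using measurable_compose[OF Xm Dn_measurable[OF nrm]] by simp

lemma nXm: "(\<lambda>\<omega>. nrm (X \<omega>)) \<in> borel_measurable M"
  using measurable_compose[OF Xm nrm_measurable[OF nrm]] by simp

lemma u_mono: "1 \<le> n \<Longrightarrow> n \<le> m \<Longrightarrow> u m \<le> u n"
  unfolding u_def
  by (intro nn_integral_mono ennreal_leI powr_mono2) (auto simp: Dn_nonneg[OF nrm] Dn_mono p less_imp_le)

lemma u1_fin: "u 1 < \<infinity>"
proof -
  have pw: "ennreal (Dn nrm a 1 x powr p) \<le> ennreal (2 powr p) * (ennreal (nrm x powr p) + ennreal (nrm (a 1) powr p))" for x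
  proof -
    have "Dn nrm a 1 x \<le> nrm (x - a 1)" by (rule Dn_le) simp
    also have "\<dots> \<le> nrm x + nrm (a 1)"
      using nrm_basic(5)[OF nrm, of x "- a 1"] nrm_basic(2)[OF nrm, of "a 1"] by simp
    finally have "Dn nrm a 1 x powr p \<le> (nrm x + nrm (a 1)) powr p"
      using p by (intro powr_mono2) (auto simp: Dn_nonneg[OF nrm])
    also have "\<dots> \<le> 2 powr p * (nrm x powr p + nrm (a 1) powr p)"
      using p by (intro powr_sum_le) (auto simp: nrm_basic(4)[OF nrm])
    finally have "ennreal (Dn nrm a 1 x powr p) \<le> ennreal (2 powr p * (nrm x powr p + nrm (a 1) powr p))"
      by (rule ennreal_leI)
    also have "\<dots> = ennreal (2 powr p) * (ennreal (nrm x powr p) + ennreal (nrm (a 1) powr p))"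
      by (simp add: ennreal_mult)
    finally show ?thesis .
  qed
  have "u 1 \<le> (\<integral>\<^sup>+ \<omega>. ennreal (2 powr p) * (ennreal (nrm (X \<omega>) powr p) + ennreal (nrm (a 1) powr p)) \<partial>M)"
    unfolding u_def by (intro nn_integral_mono pw)
  also have "\<dots> = ennreal (2 powr p) * ((\<integral>\<^sup>+ \<omega>. ennreal (nrm (X \<omega>) powr p) \<partial>M) + ennreal (nrm (a 1) powr p))"
    using nXm prob_space.emeasure_space_1[OF prob]
    by (subst nn_integral_cmult) (auto simp: nn_integral_add)
  also have "\<dots> < \<infinity>" using intp by (simp add: ennreal_mult_less_top)
  finally show ?thesis .
qed

lemma u_fin: "1 \<le> n \<Longrightarrow> u n < \<infinity>"
  using u_mono[of 1 n] u1_fin by auto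

lemma u_eq: "1 \<le> n \<Longrightarrow> u n = ennreal (U n)"
proof -
  assume n: "1 \<le> n"
  have "u n \<noteq> \<top>" using u_fin[OF n] by simp
  then show ?thesis unfolding U_def by (cases "u n") auto
qed

lemma U_nonneg: "0 \<le> U n"
  unfolding U_def by simp

lemma U_mono: "1 \<le> n \<Longrightarrow> n \<le> m \<Longrightarrow> U m \<le> U n"
  using u_mono[of n m] u_eq[of n] u_eq[of m] by (simp add: U_nonneg)

end



context gsetting begin

definition "cst = (1 - b) powr p - b powr p"

lemma cst_pos: "0 < cst"
  unfolding cst_def using b0 b1 p by (simp add: powr_less_mono2)

lemma key:
  assumes n: "1 \<le> n"
  shows "u (Suc n) + ennreal (cst * Dn nrm a n \<xi> powr p) * emeasure mu (nball nrm \<xi> (b * Dn nrm a n \<xi>)) \<le> u n"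
proof -
  define D where "D = Dn nrm a n \<xi>"
  define B where "B = nball nrm \<xi> (b * D)"
  define g where "g x = min (Dn nrm a n x) (nrm (x - \<xi>)) powr p" for x
  have D0: "0 \<le> D" unfolding D_def by (rule Dn_nonneg[OF nrm n])
  have Bs: "B \<in> sets borel" unfolding B_def by (rule nball_sets[OF nrm])
  have nXm2: "(\<lambda>\<omega>. nrm (X \<omega> - \<xi>)) \<in> borel_measurable M"
    using measurable_compose[OF borel_measurable_diff[OF Xm borel_measurable_const] nrm_measurable[OF nrm]] by simp
  note [measurable] = DXm nXm2 Xm Bs
  have gm: "(\<lambda>\<omega>. ennreal (g (X \<omega>))) \<in> borel_measurable M" unfolding g_def by measurable
  have im: "(\<lambda>\<omega>. indicator B (X \<omega>) :: ennreal) \<in> borel_measurable M" by measurable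
  have gr: "quant_err nrm M X p (first_pts a (Suc n)) \<le> quant_err nrm M X p (first_pts a n \<union> {\<xi>})"
    using greedy unfolding greedy_seq_def first_pts_Suc by blast
  have e1: "(\<integral>\<^sup>+ \<omega>. enn_powr (dist_set nrm (X \<omega>) (first_pts a (Suc n))) p \<partial>M) = u (Suc n)"
    unfolding u_def using n
    by (intro nn_integral_cong) (simp add: dist_set_Dn enn_powr_ennreal Dn_nonneg[OF nrm])
  have pe: "enn_powr (dist_set nrm x (first_pts a n \<union> {\<xi>})) p = ennreal (g x)" for x
  proof -
    have "0 \<le> min (Dn nrm a n x) (nrm (x - \<xi>))" using Dn_nonneg[OF nrm n] nrm_basic(4)[OF nrm] by simp
    then show ?thesis unfolding g_def dist_set_Dn_ins[OF n] by (rule enn_powr_ennreal)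
  qed
  have e2: "(\<integral>\<^sup>+ \<omega>. enn_powr (dist_set nrm (X \<omega>) (first_pts a n \<union> {\<xi>})) p \<partial>M) = (\<integral>\<^sup>+ \<omega>. ennreal (g (X \<omega>)) \<partial>M)"
    by (simp only: pe)
  have s1: "u (Suc n) \<le> (\<integral>\<^sup>+ \<omega>. ennreal (g (X \<omega>)) \<partial>M)"
  proof -
    have "enn_powr (u (Suc n)) (1/p) \<le> enn_powr (\<integral>\<^sup>+ \<omega>. ennreal (g (X \<omega>)) \<partial>M) (1/p)"
      using gr unfolding quant_err_def e1 e2 .
    then show ?thesis by (rule enn_powr_cancel) (use p in simp)
  qed
  have c0: "0 \<le> cst" using cst_pos by simp
  have pw: "ennreal (g x) + ennreal (cst * D powr p) * indicator B x \<le> ennreal (Dn nrm a n x powr p)" for x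
  proof (cases "x \<in> B")
    case True
    then have hx: "nrm (x - \<xi>) \<le> b * D" unfolding B_def nball_def by simp
    have "D \<le> Dn nrm a n x + nrm (\<xi> - x)" unfolding D_def by (rule Dn_lip[OF nrm n])
    then have "(1 - b) * D \<le> Dn nrm a n x" using hx nrm_basic(3)[OF nrm, of x \<xi>] by (simp add: algebra_simps)
    then have h1: "(1 - b) powr p * D powr p \<le> Dn nrm a n x powr p"
      using b1 D0 p by (subst powr_mult[symmetric]) (intro powr_mono2, auto)
    have "g x \<le> nrm (x - \<xi>) powr p" unfolding g_def using p
      by (intro powr_mono2) (auto simp: Dn_nonneg[OF nrm n] nrm_basic(4)[OF nrm])
    also have "\<dots> \<le> (b * D) powr p" using p hx by (intro powr_mono2) (auto simp: nrm_basic(4)[OF nrm])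
    also have "\<dots> = b powr p * D powr p" by (simp add: powr_mult)
    finally have "g x + cst * D powr p \<le> Dn nrm a n x powr p" using h1 unfolding cst_def by (simp add: algebra_simps)
    moreover have "0 \<le> g x" unfolding g_def by simp
    ultimately show ?thesis using True c0 by (simp add: ennreal_plus[symmetric] del: ennreal_plus)
  next
    case False
    have "g x \<le> Dn nrm a n x powr p" unfolding g_def using p
      by (intro powr_mono2) (auto simp: Dn_nonneg[OF nrm n] nrm_basic(4)[OF nrm])
    then show ?thesis using False by simp
  qed
  have ind: "(\<integral>\<^sup>+ \<omega>. indicator B (X \<omega>) \<partial>M) = emeasure mu B"
  proof -
    have "(\<integral>\<^sup>+ x. indicator B x \<partial>mu) = (\<integral>\<^sup>+ \<omega>. indicator B (X \<omega>) \<partial>M)"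
      unfolding mu_def by (rule nn_integral_distr[OF Xm]) simp
    then show ?thesis using Bs by simp
  qed
  have "u (Suc n) + ennreal (cst * D powr p) * emeasure mu B
      \<le> (\<integral>\<^sup>+ \<omega>. ennreal (g (X \<omega>)) \<partial>M) + ennreal (cst * D powr p) * (\<integral>\<^sup>+ \<omega>. indicator B (X \<omega>) \<partial>M)"
    using s1 ind by (simp add: add_right_mono)
  also have "\<dots> = (\<integral>\<^sup>+ \<omega>. ennreal (g (X \<omega>)) + ennreal (cst * D powr p) * indicator B (X \<omega>) \<partial>M)"
    using gm im by (simp add: nn_integral_add nn_integral_cmult)
  also have "\<dots> \<le> u n" unfolding u_def by (intro nn_integral_mono pw)
  finally show ?thesis unfolding D_def B_def .
qed

end


context gsetting begin

definition "Psi = max_fun nrm mu a b"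
definition "Lc = (SOME L. L > 0 \<and> (\<forall>\<xi> \<rho>. \<rho> \<ge> 0 \<longrightarrow> ennreal (L * \<rho> ^ DIM('a)) \<le> emeasure lborel (nball nrm \<xi> \<rho>)))"
definition "K0 = cst * Lc * b ^ DIM('a)"
definition "ee = p + real DIM('a)"

lemma Lc: "Lc > 0" "\<And>\<xi> \<rho>. \<rho> \<ge> 0 \<Longrightarrow> ennreal (Lc * \<rho> ^ DIM('a)) \<le> emeasure lborel (nball nrm \<xi> \<rho>)"
proof -
  obtain L where "L > 0" "\<And>\<xi> \<rho>. \<rho> \<ge> 0 \<Longrightarrow> ennreal (L * \<rho> ^ DIM('a)) \<le> emeasure lborel (nball nrm \<xi> \<rho>)"
    using lborel_nball_lower[OF nrm] by blast
  then have ex: "\<exists>L. L > 0 \<and> (\<forall>\<xi> \<rho>. \<rho> \<ge> 0 \<longrightarrow> ennreal (L * \<rho> ^ DIM('a)) \<le> emeasure lborel (nball nrm \<xi> \<rho>))"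
    by blast
  show "Lc > 0" "\<And>\<xi> \<rho>. \<rho> \<ge> 0 \<Longrightarrow> ennreal (Lc * \<rho> ^ DIM('a)) \<le> emeasure lborel (nball nrm \<xi> \<rho>)"
    using someI_ex[OF ex] unfolding Lc_def by blast+
qed

lemma K0_pos: "K0 > 0"
  unfolding K0_def using cst_pos Lc(1) b0 by simp

lemma ee_pos: "ee > 0"
  unfolding ee_def using p by simp

lemma Psi_ge:
  assumes n: "1 \<le> n"
  shows "emeasure lborel (nball nrm \<xi> (b * Dn nrm a n \<xi>)) / emeasure mu (nball nrm \<xi> (b * Dn nrm a n \<xi>)) \<le> Psi \<xi>"
  unfolding Psi_def max_fun_alt[OF nrm] using n by (intro SUP_upper) auto

lemma lemP:
  assumes n: "1 \<le> n" and fin: "Psi \<xi> \<noteq> \<infinity>"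
  shows "K0 * Dn nrm a n \<xi> powr ee \<le> enn2real (Psi \<xi>) * (U n - U (Suc n))"
proof -
  define D where "D = Dn nrm a n \<xi>"
  define \<psi> where "\<psi> = enn2real (Psi \<xi>)"
  have D0: "0 \<le> D" unfolding D_def by (rule Dn_nonneg[OF nrm n])
  have psi0: "0 \<le> \<psi>" unfolding \<psi>_def by simp
  have Psi_eq: "Psi \<xi> = ennreal \<psi>" unfolding \<psi>_def using fin by (cases "Psi \<xi>") auto
  have Ud: "U (Suc n) \<le> U n" using U_mono[OF n, of "Suc n"] by simp
  show ?thesis
  proof (cases "D = 0")
    case True
    then show ?thesis using Ud psi0 ee_pos unfolding D_def[symmetric] \<psi>_def[symmetric] by simp
  next
    case False
    then have Dp: "D > 0" using D0 by simp
    define B where "B = nball nrm \<xi> (b * D)"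
    define m where "m = measure mu B"
    have m0: "0 \<le> m" unfolding m_def by simp
    have em: "emeasure mu B = ennreal m" unfolding m_def
      by (rule finite_measure.emeasure_eq_measure[OF prob_space.axioms(1)[OF mu_prob]])
    have "u (Suc n) + ennreal (cst * D powr p) * ennreal m \<le> u n"
      using key[OF n, of \<xi>] unfolding D_def[symmetric] B_def[symmetric] em .
    then have "ennreal (U (Suc n) + cst * D powr p * m) \<le> ennreal (U n)"
      using u_eq[OF n] u_eq[of "Suc n"] n cst_pos m0 U_nonneg
      by (simp add: ennreal_mult[symmetric] ennreal_plus[symmetric] del: ennreal_plus)
    then have h1: "U (Suc n) + cst * D powr p * m \<le> U n" using U_nonneg by simp
    have lam: "ennreal (Lc * (b * D) ^ DIM('a)) \<le> emeasure lborel B"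
      unfolding B_def using b0 D0 by (intro Lc(2)) simp
    have lpos: "Lc * (b * D) ^ DIM('a) > 0" using Lc(1) b0 Dp by simp
    have ps: "emeasure lborel B / emeasure mu B \<le> Psi \<xi>" unfolding B_def D_def by (rule Psi_ge[OF n])
    have "m \<noteq> 0"
    proof
      assume "m = 0"
      have "emeasure lborel B \<noteq> 0" using lam lpos by (metis ennreal_eq_0_iff le_zero_eq not_le)
      then have "emeasure lborel B / emeasure mu B = \<top>" using \<open>m = 0\<close> em by (simp add: ennreal_divide_eq_top_iff)
      then show False using ps fin by (simp add: top_unique)
    qed
    then have mp: "m > 0" using m0 by simp
    have "ennreal (Lc * (b * D) ^ DIM('a)) / ennreal m \<le> emeasure lborel B / emeasure mu B"
      unfolding em by (rule divide_right_mono_ennreal[OF lam])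
    also have "\<dots> \<le> ennreal \<psi>" using ps Psi_eq by simp
    finally have "ennreal (Lc * (b * D) ^ DIM('a) / m) \<le> ennreal \<psi>"
      using lpos mp by (simp add: divide_ennreal)
    then have "Lc * (b * D) ^ DIM('a) / m \<le> \<psi>" using psi0 by simp
    then have h2: "Lc * (b * D) ^ DIM('a) \<le> \<psi> * m" using mp by (simp add: field_simps)
    have "K0 * D powr ee = (cst * D powr p) * (Lc * (b * D) ^ DIM('a))"
      unfolding K0_def ee_def using Dp by (simp add: powr_add powr_realpow power_mult_distrib)
    also have "\<dots> \<le> (cst * D powr p) * (\<psi> * m)"
      using h2 cst_pos by (intro mult_left_mono) auto
    also have "\<dots> = \<psi> * (cst * D powr p * m)" by simp
    also have "\<dots> \<le> \<psi> * (U n - U (Suc n))" using h1 psi0 by (intro mult_left_mono) auto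
    finally show ?thesis unfolding D_def \<psi>_def .
  qed
qed

lemma lemQ:
  assumes n: "1 \<le> n" and fin: "Psi \<xi> \<noteq> \<infinity>"
  shows "K0 * real n * Dn nrm a (2 * n) \<xi> powr ee \<le> enn2real (Psi \<xi>) * U n"
proof -
  define \<psi> where "\<psi> = enn2real (Psi \<xi>)"
  have psi0: "0 \<le> \<psi>" unfolding \<psi>_def by simp
  have ind: "K0 * real j * Dn nrm a (n + j) \<xi> powr ee \<le> \<psi> * (U n - U (n + j))" for j
  proof (induction j)
    case 0 then show ?case by simp
  next
    case (Suc j)
    have nj: "1 \<le> n + j" using n by simp
    have "Dn nrm a (Suc (n + j)) \<xi> powr ee \<le> Dn nrm a (n + j) \<xi> powr ee"
      using ee_pos Dn_mono[OF nj, of "Suc (n + j)"] by (intro powr_mono2) (auto simp: Dn_nonneg[OF nrm] nj)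
    then have "(K0 * (real j + 1)) * Dn nrm a (Suc (n + j)) \<xi> powr ee \<le> (K0 * (real j + 1)) * Dn nrm a (n + j) \<xi> powr ee"
      using K0_pos by (intro mult_left_mono) auto
    then have "K0 * real (Suc j) * Dn nrm a (n + Suc j) \<xi> powr ee
        \<le> K0 * real j * Dn nrm a (n + j) \<xi> powr ee + K0 * Dn nrm a (n + j) \<xi> powr ee"
      by (simp add: algebra_simps)
    also have "\<dots> \<le> \<psi> * (U n - U (n + j)) + \<psi> * (U (n + j) - U (Suc (n + j)))"
      using Suc.IH lemP[OF nj fin] unfolding \<psi>_def by (intro add_mono) auto
    also have "\<dots> = \<psi> * (U n - U (n + Suc j))" by (simp add: algebra_simps)
    finally show ?case .
  qed
  have "K0 * real n * Dn nrm a (2 * n) \<xi> powr ee \<le> \<psi> * (U n - U (n + n))"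
    using ind[of n] by (simp add: mult_2)
  also have "\<dots> \<le> \<psi> * U n" using psi0 U_nonneg by (intro mult_left_mono) auto
  finally show ?thesis unfolding \<psi>_def .
qed

end


lemma enn_powr_measurable:
  assumes f: "f \<in> borel_measurable N"
  shows "(\<lambda>x. enn_powr (f x) r) \<in> borel_measurable N"
proof -
  have "f -` {\<infinity>} \<inter> space N \<in> sets N" by (rule measurable_sets[OF f]) simp
  moreover have "f -` {\<infinity>} \<inter> space N = {x \<in> space N. f x = \<infinity>}" by auto
  ultimately have s: "{x \<in> space N. f x = \<infinity>} \<in> sets N" by simp
  note [measurable] = f
  have g: "(\<lambda>x. ennreal (enn2real (f x) powr r)) \<in> borel_measurable N" by measurable
  show ?thesis unfolding enn_powr_def by (rule measurable_If[OF measurable_const g s]) simp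
qed

lemma enn_powr_le_split:
  assumes "0 < \<alpha>" "\<alpha> \<le> \<beta>"
  shows "enn_powr x \<alpha> \<le> 1 + enn_powr x \<beta>"
proof (cases "x = \<infinity>")
  case True then show ?thesis unfolding enn_powr_def by simp
next
  case False
  then obtain t where t: "x = ennreal t" "0 \<le> t" by (metis ennreal_cases infinity_ennreal_def)
  have "t powr \<alpha> \<le> 1 + t powr \<beta>"
  proof (cases "t \<le> 1")
    case True
    then have "t powr \<alpha> \<le> 1" using t assms by (intro powr_le1) auto
    moreover have "0 \<le> t powr \<beta>" by simp
    ultimately show ?thesis by linarith
  next
    case False
    then have "t powr \<alpha> \<le> t powr \<beta>" using assms by (intro powr_mono) auto
    then show ?thesis by simp
  qed
  then have "ennreal (t powr \<alpha>) \<le> ennreal (1 + t powr \<beta>)" by (rule ennreal_leI)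
  then show ?thesis using t by (simp add: enn_powr_ennreal)
qed

locale gsetting2 = gsetting nrm M X p b a
  for nrm :: "'a::euclidean_space \<Rightarrow> real" and M :: "'b measure" and X p b a +
  fixes q :: real
  assumes pq: "p < q" and intPsi: "(\<integral>\<^sup>+ \<xi>. enn_powr (Psi \<xi>) (q / ee) \<partial>mu) < \<infinity>"
begin

lemma Psi_meas: "Psi \<in> borel_measurable borel"
  unfolding Psi_def
  by (rule max_fun_measurable[OF nrm prob_space.axioms(1)[OF mu_prob] sets_mu])

lemma Psi_meas_mu: "Psi \<in> borel_measurable mu"
  using Psi_meas by (simp cong: measurable_cong_sets)

lemma Psi_pow_meas: "(\<lambda>\<xi>. enn_powr (Psi \<xi>) r) \<in> borel_measurable borel"
  by (rule enn_powr_measurable[OF Psi_meas])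

lemma Psi_pow_meas_mu: "(\<lambda>\<xi>. enn_powr (Psi \<xi>) r) \<in> borel_measurable mu"
  using Psi_pow_meas by (simp cong: measurable_cong_sets)

lemma Psi_pow_X: "(\<lambda>\<omega>. enn_powr (Psi (X \<omega>)) r) \<in> borel_measurable M"
  using measurable_compose[OF Xm Psi_pow_meas] by simp

definition "J = (\<integral>\<^sup>+ \<xi>. enn_powr (Psi \<xi>) (p / ee) \<partial>mu)"
definition "Ipsi = (\<integral>\<^sup>+ \<xi>. enn_powr (Psi \<xi>) (q / ee) \<partial>mu)"

lemma J_fin: "J < \<infinity>"
proof -
  have "J \<le> (\<integral>\<^sup>+ \<xi>. 1 + enn_powr (Psi \<xi>) (q / ee) \<partial>mu)"
    unfolding J_def using p pq ee_pos
    by (intro nn_integral_mono enn_powr_le_split) (auto simp: divide_right_mono)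
  also have "\<dots> = 1 + Ipsi"
    unfolding Ipsi_def using Psi_pow_meas_mu prob_space.emeasure_space_1[OF mu_prob]
    by (subst nn_integral_add) auto
  also have "\<dots> < \<infinity>" using intPsi unfolding Ipsi_def by simp
  finally show ?thesis .
qed

lemma int_Psi_X: "(\<integral>\<^sup>+ \<omega>. enn_powr (Psi (X \<omega>)) r \<partial>M) = (\<integral>\<^sup>+ \<xi>. enn_powr (Psi \<xi>) r \<partial>mu)"
  unfolding mu_def using Psi_pow_meas by (subst nn_integral_distr[OF Xm]) auto

lemma ptw:
  assumes m: "1 \<le> m" and Up: "0 < U m" and r: "0 < r"
  shows "ennreal (Dn nrm a (2 * m) \<xi> powr r) \<le> ennreal ((U m / (K0 * m)) powr (r / ee)) * enn_powr (Psi \<xi>) (r / ee)"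
proof (cases "Psi \<xi> = \<infinity>")
  case True
  have "(U m / (K0 * m)) powr (r / ee) > 0" using Up K0_pos m by simp
  then show ?thesis using True unfolding enn_powr_def by simp
next
  case False
  define \<psi> where "\<psi> = enn2real (Psi \<xi>)"
  define c where "c = U m / (K0 * m)"
  define D where "D = Dn nrm a (2 * m) \<xi>"
  have psi0: "0 \<le> \<psi>" unfolding \<psi>_def by simp
  have c0: "0 < c" unfolding c_def using Up K0_pos m by simp
  have D0: "0 \<le> D" unfolding D_def using m by (intro Dn_nonneg[OF nrm]) simp
  have Psi_eq: "Psi \<xi> = ennreal \<psi>" unfolding \<psi>_def using False by (cases "Psi \<xi>") auto
  have "K0 * real m * D powr ee \<le> \<psi> * U m" unfolding D_def \<psi>_def by (rule lemQ[OF m False])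
  then have "D powr ee \<le> \<psi> * c" unfolding c_def using K0_pos m by (simp add: field_simps)
  then have "(D powr ee) powr (r / ee) \<le> (\<psi> * c) powr (r / ee)"
    using r ee_pos by (intro powr_mono2) auto
  then have "D powr r \<le> c powr (r / ee) * \<psi> powr (r / ee)"
    using ee_pos by (simp add: powr_powr powr_mult mult.commute)
  then show ?thesis
    unfolding D_def[symmetric] c_def[symmetric] Psi_eq using psi0 c0
    by (simp add: enn_powr_ennreal ennreal_mult[symmetric])
qed

lemma lemR:
  assumes m: "1 \<le> m"
  shows "U (2 * m) \<le> (U m / (K0 * m)) powr (p / ee) * enn2real J"
proof (cases "U m = 0")
  case True
  then have "U (2 * m) \<le> 0" using U_mono[OF m, of "2 * m"] by simp
  moreover have "0 \<le> (U m / (K0 * m)) powr (p / ee) * enn2real J" by simp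
  ultimately show ?thesis by linarith
next
  case False
  then have Up: "0 < U m" using U_nonneg[of m] by simp
  define c where "c = (U m / (K0 * m)) powr (p / ee)"
  have c0: "0 \<le> c" unfolding c_def by simp
  have "ennreal (U (2 * m)) = u (2 * m)" using u_eq[of "2 * m"] m by simp
  also have "\<dots> \<le> (\<integral>\<^sup>+ \<omega>. ennreal c * enn_powr (Psi (X \<omega>)) (p / ee) \<partial>M)"
    unfolding u_def c_def by (intro nn_integral_mono ptw[OF m Up p])
  also have "\<dots> = ennreal c * J"
    unfolding J_def int_Psi_X[symmetric] using Psi_pow_X
    by (subst nn_integral_cmult) auto
  also have "\<dots> = ennreal (c * enn2real J)" using J_fin c0 by (cases J) (auto simp: ennreal_mult)
  finally have "ennreal (U (2 * m)) \<le> ennreal (c * enn2real J)" .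
  moreover have "0 \<le> c * enn2real J" using c0 by simp
  ultimately have "U (2 * m) \<le> c * enn2real J" by simp
  then show ?thesis unfolding c_def .
qed

end


lemma m_third: assumes "2 \<le> (n::nat)" "0 \<le> s" shows "real (n div 2) powr (- s) \<le> 3 powr s * real n powr (- s)"
proof -
  have "n = 2 * (n div 2) + n mod 2" by simp
  moreover have "n mod 2 \<le> 1" by simp
  moreover have "1 \<le> n div 2" using assms by simp
  ultimately have "n \<le> 3 * (n div 2)" by linarith
  then have "real n \<le> 3 * real (n div 2)" by (metis of_nat_le_iff of_nat_mult of_nat_numeral)
  then have "real n / 3 \<le> real (n div 2)" by simp
  then have "real (n div 2) powr (- s) \<le> (real n / 3) powr (- s)"
    using assms by (intro powr_mono2') auto
  also have "(real n / 3) powr (- s) = real n powr (- s) / 3 powr (- s)" by (rule powr_divide)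
  also have "3 powr (- s) = inverse (3 powr s)" by (rule powr_minus)
  also have "real n powr (- s) / inverse (3 powr s) = 3 powr s * real n powr (- s)" by (simp only: divide_inverse inverse_inverse_eq mult.commute)
  finally show ?thesis .
qed

context gsetting2 begin

definition "dd = real DIM('a)"
definition "gam = p / dd"
definition "alp = p / ee"

lemma dd_ge1: "1 \<le> dd" unfolding dd_def by (simp add: DIM_positive Suc_le_eq)
lemma ee_dd: "ee = p + dd" unfolding ee_def dd_def by simp
lemma alp_pos: "0 < alp" unfolding alp_def using p ee_pos by simp
lemma alp_lt1: "alp < 1" unfolding alp_def ee_dd using p dd_ge1 by simp
lemma gam_pos: "0 < gam" unfolding gam_def using p dd_ge1 by simp
lemma gam_gen: "(- gam - 1) * (r / ee) = - (r / dd)"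
proof -
  have d0: "dd \<noteq> 0" and e0: "p + dd \<noteq> 0" using p dd_ge1 by auto
  have "- gam - 1 = - ((p + dd) / dd)" unfolding gam_def using d0 by (simp add: field_simps)
  then show ?thesis unfolding ee_dd using d0 e0 by simp
qed
lemma gam_alp: "(- gam - 1) * alp = - gam"
  using gam_gen[of p] unfolding alp_def gam_def .
lemma gam_q: "(- gam - 1) * (q / ee) = - (q / dd)"
  by (rule gam_gen)

lemma ratio_eq:
  assumes "1 \<le> m" "0 \<le> C"
  shows "C * real m powr (- gam) / (K0 * real m) = (C / K0) * real m powr (- gam - 1)"
proof -
  have "real m powr (- gam - 1) = real m powr (- gam) / real m" using assms by (simp add: powr_diff)
  then show ?thesis by simp
qed

lemma ratio_powr:
  assumes "1 \<le> m" "0 \<le> C" "0 \<le> s"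
  shows "((C / K0) * real m powr (- gam - 1)) powr s = (C / K0) powr s * real m powr ((- gam - 1) * s)"
  by (simp only: powr_mult powr_powr)

lemma boot: "\<exists>C>0. \<forall>n\<ge>1. U n \<le> C * real n powr (- gam)"
proof -
  define Jr where "Jr = enn2real J"
  define A where "A = K0 powr (- alp) * 3 powr gam * Jr"
  define C where "C = max (U 1) (max 1 (A powr (1 / (1 - alp))))"
  have Jr0: "0 \<le> Jr" unfolding Jr_def by simp
  have A0: "0 \<le> A" unfolding A_def using Jr0 by simp
  have C1: "1 \<le> C" unfolding C_def by simp
  have "A powr (1 / (1 - alp)) \<le> C" unfolding C_def by simp
  then have "(A powr (1 / (1 - alp))) powr (1 - alp) \<le> C powr (1 - alp)"
    using alp_lt1 by (intro powr_mono2) auto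
  then have hA: "A \<le> C powr (1 - alp)" using alp_lt1 A0 by (simp add: powr_powr)
  have main: "1 \<le> n \<longrightarrow> U n \<le> C * real n powr (- gam)" for n
  proof (induction n rule: less_induct)
    case (less n)
    show ?case
    proof (cases "n = 1")
      case True then show ?thesis unfolding C_def by simp
    next
      case False
      show ?thesis
      proof
        assume n1: "1 \<le> n"
        then have n2: "2 \<le> n" using False by simp
        define m where "m = n div 2"
        have m1: "1 \<le> m" "m < n" "2 * m \<le> n" unfolding m_def using n2 by auto
        have IH: "U m \<le> C * real m powr (- gam)" using less.IH m1 by blast
        have "U n \<le> U (2 * m)" using U_mono[of "2 * m" n] m1 by simp
        also have "\<dots> \<le> (U m / (K0 * m)) powr alp * Jr" unfolding alp_def Jr_def by (rule lemR[OF m1(1)])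
        also have "\<dots> \<le> (C * real m powr (- gam) / (K0 * m)) powr alp * Jr"
          using IH K0_pos m1 alp_pos U_nonneg[of m] Jr0
          by (intro mult_right_mono powr_mono2 divide_right_mono) auto
        also have "\<dots> = ((C / K0) * real m powr (- gam - 1)) powr alp * Jr"
          by (subst ratio_eq[OF m1(1)]) (use C1 in auto)
        also have "\<dots> = (C / K0) powr alp * real m powr (- gam) * Jr"
          by (subst ratio_powr[OF m1(1)]) (use C1 alp_pos gam_alp in auto)
        also have "\<dots> = C powr alp * K0 powr (- alp) * real m powr (- gam) * Jr"
          by (simp only: powr_divide, simp only: powr_minus divide_inverse)
        also have "\<dots> \<le> C powr alp * K0 powr (- alp) * (3 powr gam * real n powr (- gam)) * Jr"
          using m_third[OF n2, of gam] gam_pos Jr0 unfolding m_def[symmetric]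
          by (intro mult_right_mono mult_left_mono) auto
        also have "\<dots> = C powr alp * A * real n powr (- gam)" unfolding A_def by simp
        also have "\<dots> \<le> C powr alp * C powr (1 - alp) * real n powr (- gam)"
          using hA by (intro mult_right_mono mult_left_mono) auto
        also have "\<dots> = C * real n powr (- gam)" using C1 by (simp add: powr_add[symmetric])
        finally show "U n \<le> C * real n powr (- gam)" .
      qed
    qed
  qed
  show ?thesis using main C1 by (intro exI[of _ C]) auto
qed

definition "Cb = (SOME C. C > 0 \<and> (\<forall>n\<ge>1. U n \<le> C * real n powr (- gam)))"

lemma Cb: "Cb > 0" "\<And>n. 1 \<le> n \<Longrightarrow> U n \<le> Cb * real n powr (- gam)"
  using someI_ex[OF boot] unfolding Cb_def by blast+

definition "Kq = (Cb / K0) powr (q / ee) * 3 powr (q / dd)"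

lemma Kq_pos: "0 < Kq" unfolding Kq_def using Cb(1) K0_pos by simp

lemma q_bound:
  assumes n2: "2 \<le> n"
  shows "(\<integral>\<^sup>+ \<omega>. ennreal (Dn nrm a n (X \<omega>) powr q) \<partial>M) \<le> ennreal (Kq * real n powr (- (q / dd))) * Ipsi"
proof -
  define m where "m = n div 2"
  have m1: "1 \<le> m" "2 * m \<le> n" unfolding m_def using n2 by auto
  have q0: "0 < q" using p pq by simp
  have DXmn: "(\<lambda>\<omega>. ennreal (Dn nrm a k (X \<omega>) powr r)) \<in> borel_measurable M" for k r
    using DXm[of k] by measurable
  show ?thesis
  proof (cases "U m = 0")
    case True
    then have "u m = 0" using u_eq[OF m1(1)] by simp
    then have "AE \<omega> in M. ennreal (Dn nrm a m (X \<omega>) powr p) = 0"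
      unfolding u_def using DXmn by (simp add: nn_integral_0_iff_AE)
    then have "AE \<omega> in M. ennreal (Dn nrm a n (X \<omega>) powr q) = 0"
    proof (rule eventually_mono)
      fix \<omega> assume "ennreal (Dn nrm a m (X \<omega>) powr p) = 0"
      then have "Dn nrm a m (X \<omega>) = 0" using Dn_nonneg[OF nrm m1(1)] by (simp add: ennreal_eq_0_iff)
      moreover have "Dn nrm a n (X \<omega>) \<le> Dn nrm a m (X \<omega>)" using m1 by (intro Dn_mono) auto
      moreover have "0 \<le> Dn nrm a n (X \<omega>)" using n2 by (intro Dn_nonneg[OF nrm]) auto
      ultimately show "ennreal (Dn nrm a n (X \<omega>) powr q) = 0" by simp
    qed
    then have "(\<integral>\<^sup>+ \<omega>. ennreal (Dn nrm a n (X \<omega>) powr q) \<partial>M) = 0"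
      using DXmn by (simp add: nn_integral_0_iff_AE)
    then show ?thesis by simp
  next
    case False
    then have Up: "0 < U m" using U_nonneg[of m] by simp
    define c where "c = (U m / (K0 * m)) powr (q / ee)"
    have c_le: "c \<le> Kq * real n powr (- (q / dd))"
    proof -
      have "c \<le> (Cb * real m powr (- gam) / (K0 * m)) powr (q / ee)"
        unfolding c_def using Cb(2)[OF m1(1)] K0_pos m1 q0 ee_pos U_nonneg[of m]
        by (intro powr_mono2 divide_right_mono) auto
      also have "\<dots> = ((Cb / K0) * real m powr (- gam - 1)) powr (q / ee)"
        by (subst ratio_eq[OF m1(1)]) (use Cb(1) in auto)
      also have "\<dots> = (Cb / K0) powr (q / ee) * real m powr (- (q / dd))"
        by (subst ratio_powr[OF m1(1)]) (use Cb(1) q0 ee_pos gam_q in auto)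
      also have "\<dots> \<le> (Cb / K0) powr (q / ee) * (3 powr (q / dd) * real n powr (- (q / dd)))"
        using m_third[OF n2, of "q / dd"] q0 dd_ge1 unfolding m_def[symmetric]
        by (intro mult_left_mono) auto
      also have "\<dots> = Kq * real n powr (- (q / dd))" unfolding Kq_def by simp
      finally show ?thesis .
    qed
    have pw: "ennreal (Dn nrm a n x powr q) \<le> ennreal c * enn_powr (Psi x) (q / ee)" for x
    proof -
      have "Dn nrm a n x powr q \<le> Dn nrm a (2 * m) x powr q"
        using m1 q0 by (intro powr_mono2 Dn_mono) (auto intro: Dn_nonneg[OF nrm])
      then have "ennreal (Dn nrm a n x powr q) \<le> ennreal (Dn nrm a (2 * m) x powr q)" by (rule ennreal_leI)
      also have "\<dots> \<le> ennreal c * enn_powr (Psi x) (q / ee)" unfolding c_def by (rule ptw[OF m1(1) Up q0])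
      finally show ?thesis .
    qed
    have "(\<integral>\<^sup>+ \<omega>. ennreal (Dn nrm a n (X \<omega>) powr q) \<partial>M) \<le> (\<integral>\<^sup>+ \<omega>. ennreal c * enn_powr (Psi (X \<omega>)) (q / ee) \<partial>M)"
      by (intro nn_integral_mono pw)
    also have "\<dots> = ennreal c * Ipsi"
      unfolding Ipsi_def int_Psi_X[symmetric] using Psi_pow_X by (subst nn_integral_cmult) auto
    also have "\<dots> \<le> ennreal (Kq * real n powr (- (q / dd))) * Ipsi"
      using c_le by (intro mult_right_mono ennreal_leI) auto
    finally show ?thesis .
  qed
qed

end


theorem proposition3p2:
  fixes nrm :: "'a::euclidean_space \<Rightarrow> real"
    and M :: "'b measure" and X :: "'b \<Rightarrow> 'a"
    and p q b :: real and a :: "nat \<Rightarrow> 'a"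
  assumes "is_norm nrm"
    and "prob_space M" and "X \<in> borel_measurable M"
    and "0 < p" and "p < q"
    and "(\<integral>\<^sup>+ \<omega>. ennreal (nrm (X \<omega>) powr p) \<partial>M) < \<infinity>"
    and "greedy_seq nrm M X p a"
    and "0 < b" and "b < 1/2"
    and "(\<integral>\<^sup>+ \<xi>. enn_powr (max_fun nrm (distr M borel X) a b \<xi>) (q / (p + real DIM('a)))
            \<partial>(distr M borel X)) < \<infinity>"
  shows "(\<integral>\<^sup>+ \<omega>. ennreal (nrm (X \<omega>) powr q) \<partial>M) < \<infinity>
    \<and> limsup (\<lambda>n. ennreal (real n powr (1 / real DIM('a))) * quant_err nrm M X q (first_pts a n)) < \<infinity>"
proof -
  interpret G: gsetting nrm M X p b a
    by (intro gsetting.intro assms(1-4) assms(6-9))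
  interpret G2: gsetting2 nrm M X p b a q
  proof (intro gsetting2.intro G.gsetting_axioms gsetting2_axioms.intro)
    show "p < q" by (rule assms(5))
    show "(\<integral>\<^sup>+ \<xi>. enn_powr (G.Psi \<xi>) (q / G.ee) \<partial>G.mu) < \<infinity>"
      using assms(10) unfolding G.Psi_def G.mu_def G.ee_def .
  qed
  have q0: "0 < q" using assms(4,5) by simp
  have dd: "G2.dd = real DIM('a)" by (simp add: G2.dd_def)
  have Ifin: "G2.Ipsi < \<infinity>" using G2.intPsi unfolding G2.Ipsi_def .
  define Ir where "Ir = enn2real G2.Ipsi"
  have Ir0: "0 \<le> Ir" unfolding Ir_def by simp
  have Ieq: "G2.Ipsi = ennreal Ir" unfolding Ir_def using Ifin by simp
  have DXmq: "(\<lambda>\<omega>. ennreal (Dn nrm a k (X \<omega>) powr r)) \<in> borel_measurable M" for k r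
    using G.DXm[of k] by measurable
  have qb: "(\<integral>\<^sup>+ \<omega>. ennreal (Dn nrm a n (X \<omega>) powr q) \<partial>M) \<le> ennreal (G2.Kq * real n powr (- (q / G2.dd)) * Ir)"
    if n2: "2 \<le> n" for n
  proof -
    have "(\<integral>\<^sup>+ \<omega>. ennreal (Dn nrm a n (X \<omega>) powr q) \<partial>M) \<le> ennreal (G2.Kq * real n powr (- (q / G2.dd))) * G2.Ipsi"
      by (rule G2.q_bound[OF n2])
    also have "\<dots> = ennreal (G2.Kq * real n powr (- (q / G2.dd)) * Ir)"
      unfolding Ieq using G2.Kq_pos Ir0 by (simp add: ennreal_mult)
    finally show ?thesis .
  qed
  define R where "R = nrm (a 1) + nrm (a 2)"
  have R0: "0 \<le> R" unfolding R_def using nrm_basic(4)[OF assms(1)] by (simp add: add_nonneg_nonneg)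
  have pw: "ennreal (nrm x powr q) \<le> ennreal (2 powr q) * (ennreal (Dn nrm a 2 x powr q) + ennreal (R powr q))" for x
  proof -
    obtain i where i: "i \<in> {1..2}" "Dn nrm a 2 x = nrm (x - a i)" using Dn_attained[of 2 nrm a x] by auto
    have "i = 1 \<or> i = 2" using i(1) by auto
    then have "nrm (a i) \<le> R" using nrm_basic(4)[OF assms(1), of "a 1"] nrm_basic(4)[OF assms(1), of "a 2"]
      unfolding R_def by auto
    then have "nrm x \<le> Dn nrm a 2 x + R" using nrm_basic(7)[OF assms(1), of x "a i"] i(2) by simp
    then have "nrm x powr q \<le> (Dn nrm a 2 x + R) powr q"
      using q0 by (intro powr_mono2) (auto simp: nrm_basic(4)[OF assms(1)])
    also have "\<dots> \<le> 2 powr q * (Dn nrm a 2 x powr q + R powr q)"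
      using q0 R0 by (intro powr_sum_le) (auto simp: Dn_nonneg[OF assms(1)])
    finally have "ennreal (nrm x powr q) \<le> ennreal (2 powr q * (Dn nrm a 2 x powr q + R powr q))"
      by (rule ennreal_leI)
    also have "\<dots> = ennreal (2 powr q) * (ennreal (Dn nrm a 2 x powr q) + ennreal (R powr q))"
      by (simp add: ennreal_mult)
    finally show ?thesis .
  qed
  have "(\<integral>\<^sup>+ \<omega>. ennreal (nrm (X \<omega>) powr q) \<partial>M)
      \<le> (\<integral>\<^sup>+ \<omega>. ennreal (2 powr q) * (ennreal (Dn nrm a 2 (X \<omega>) powr q) + ennreal (R powr q)) \<partial>M)"
    by (intro nn_integral_mono pw)
  also have "\<dots> = ennreal (2 powr q) * ((\<integral>\<^sup>+ \<omega>. ennreal (Dn nrm a 2 (X \<omega>) powr q) \<partial>M) + ennreal (R powr q))"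
    using DXmq prob_space.emeasure_space_1[OF assms(2)]
    by (subst nn_integral_cmult) (auto simp: nn_integral_add)
  also have "\<dots> < \<infinity>"
  proof -
    have "(\<integral>\<^sup>+ \<omega>. ennreal (Dn nrm a 2 (X \<omega>) powr q) \<partial>M) < \<top>"
      by (rule le_less_trans[OF qb[of 2]]) simp_all
    then show ?thesis by (simp add: ennreal_mult_less_top)
  qed
  finally have claim1: "(\<integral>\<^sup>+ \<omega>. ennreal (nrm (X \<omega>) powr q) \<partial>M) < \<infinity>" .
  define B where "B = (G2.Kq * Ir) powr (1 / q)"
  have ev: "ennreal (real n powr (1 / real DIM('a))) * quant_err nrm M X q (first_pts a n) \<le> ennreal B"
    if n2: "2 \<le> n" for n
  proof -
    have n1: "1 \<le> n" using n2 by simp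
    have npos: "0 < real n" using n2 by simp
    define V where "V = (\<integral>\<^sup>+ \<omega>. ennreal (Dn nrm a n (X \<omega>) powr q) \<partial>M)"
    have qe: "quant_err nrm M X q (first_pts a n) = enn_powr V (1 / q)"
      unfolding quant_err_def V_def using n1
      by (intro arg_cong2[where f = enn_powr] nn_integral_cong refl)
        (simp add: dist_set_Dn enn_powr_ennreal Dn_nonneg[OF assms(1)])
    have Vle: "V \<le> ennreal (G2.Kq * real n powr (- (q / G2.dd)) * Ir)" unfolding V_def by (rule qb[OF n2])
    have Vlt: "V < \<top>" by (rule le_less_trans[OF Vle]) simp
    define v where "v = enn2real V"
    have v: "V = ennreal v" "0 \<le> v" unfolding v_def using Vlt by simp_all
    have "v \<le> G2.Kq * real n powr (- (q / G2.dd)) * Ir" using Vle v G2.Kq_pos Ir0 by simp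
    then have "v powr (1 / q) \<le> (G2.Kq * real n powr (- (q / G2.dd)) * Ir) powr (1 / q)"
      using v q0 by (intro powr_mono2) auto
    also have "\<dots> = B * real n powr (- (1 / G2.dd))"
    proof -
      have "(real n powr (- (q / G2.dd))) powr (1 / q) = real n powr (- (1 / G2.dd))"
        using q0 by (simp add: powr_powr)
      then show ?thesis unfolding B_def by (simp add: powr_mult mult.commute mult.left_commute)
    qed
    finally have vb: "v powr (1 / q) \<le> B * real n powr (- (1 / G2.dd))" .
    have "real n powr (1 / real DIM('a)) * (v powr (1 / q)) \<le> real n powr (1 / G2.dd) * (B * real n powr (- (1 / G2.dd)))"
      unfolding dd by (intro mult_left_mono vb[unfolded dd]) simp
    also have "\<dots> = B * (real n powr (1 / G2.dd) * real n powr (- (1 / G2.dd)))" by simp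
    also have "real n powr (1 / G2.dd) * real n powr (- (1 / G2.dd)) = 1"
      using npos by (simp add: powr_add[symmetric])
    finally have fin: "real n powr (1 / real DIM('a)) * (v powr (1 / q)) \<le> B" by simp
    have "ennreal (real n powr (1 / real DIM('a))) * quant_err nrm M X q (first_pts a n)
        = ennreal (real n powr (1 / real DIM('a)) * (v powr (1 / q)))"
      unfolding qe v(1) using v(2) by (simp add: enn_powr_ennreal ennreal_mult)
    also have "\<dots> \<le> ennreal B" using fin by (rule ennreal_leI)
    finally show ?thesis .
  qed
  have "limsup (\<lambda>n. ennreal (real n powr (1 / real DIM('a))) * quant_err nrm M X q (first_pts a n)) \<le> ennreal B"
    by (rule Limsup_bounded) (use ev in \<open>auto intro: eventually_sequentiallyI[of 2]\<close>)
  also have "\<dots> < \<infinity>" by simp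
  finally show ?thesis using claim1 by simp
qed


end
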